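(* Let $V$, $f$, $\mathcal{A}$, $k,\tau,\eta$ be as described in the context (in particular $f$ normalized monotone submodular, $\mathcal{A}$ satisfying the $\beta$-iterative property, $\eta\ge4(\log k+1)$, $2\le\tau\le\frac{k}{3\eta(\log k+2)}$), and let $X$ and $Y$ be buckets constructed by PRo such that $Y$ is constructed at a later time than $X$. For any set $E_Y\subseteq Y$, $$f(X\cup(Y\setminus E_Y))\ge\frac{1}{1+\alpha}f(Y)\quad\text{and}\quad f(E_Y\mid X)\le\alpha f(X),$$ where $\alpha=\beta\frac{|E_Y|}{|X|}$.
   Context: Notation: $f(Y\mid X):=f(X\cup Y)-f(X)$; logarithms are to base 2. $V$ is a finite ground set, $f:2^V\to\mathbb{R}_{\ge0}$ is normalized ($f(\emptyset)=0$), monotone and submodular. A subroutine $\mathcal{A}(k',T)$ outputs an ordered set $(v_1,\dots,v_{k'})$ of elements of $T\subseteq V$; $\mathcal{A}_i(T)=\{v_1,\dots,v_i\}$; it satisfies the $\beta$-iterative property ($\beta\ge1$) if $f(\mathcal{A}_{i+1}(T))-f(\mathcal{A}_i(T))\ge\frac1\beta\max_{v\in T}f(v\mid\mathcal{A}_i(T))$ for all $T,i$. Algorithm PRo (inputs $V,k,\tau,\eta\in\mathbb{N}_+,\mathcal{A}$): $S_0\leftarrow\emptyset$; for $i=0,\dots,\lceil\log\tau\rceil$ and for $j=1,\dots,\lceil\tau/2^i\rceil$: $B_j\leftarrow\mathcal{A}(2^i\eta,V\setminus S_0)$, $S_0\leftarrow S_0\cup B_j$ (each such $B_j$ is a bucket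 of partition $i$); then $S_1\leftarrow\mathcal{A}(k-|S_0|,V\setminus S_0)$; output $S=S_0\cup S_1$. *)

theory Defs
  imports Complex_Main
begin

definition normalized :: "('a set \<Rightarrow> real) \<Rightarrow> bool" where
  "normalized f \<longleftrightarrow> f {} = 0"

definition nonneg_on :: "'a set \<Rightarrow> ('a set \<Rightarrow> real) \<Rightarrow> bool" where
  "nonneg_on V f \<longleftrightarrow> (\<forall>A. A \<subseteq> V \<longrightarrow> f A \<ge> 0)"

definition monotone_on_sets :: "'a set \<Rightarrow> ('a set \<Rightarrow> real) \<Rightarrow> bool" where
  "monotone_on_sets V f \<longleftrightarrow> (\<forall>A B. A \<subseteq> B \<and> B \<subseteq> V \<longrightarrow> f A \<le> f B)"

definition submodular_on :: "'a set \<Rightarrow> ('a set \<Rightarrow> real) \<Rightarrow> bool" where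
  "submodular_on V f \<longleftrightarrow>
     (\<forall>A B. A \<subseteq> V \<and> B \<subseteq> V \<longrightarrow> f (A \<union> B) + f (A \<inter> B) \<le> f A + f B)"

definition marg :: "('a set \<Rightarrow> real) \<Rightarrow> 'a set \<Rightarrow> 'a set \<Rightarrow> real" where
  "marg f Y X = f (X \<union> Y) - f X"

definition valid_subroutine :: "'a set \<Rightarrow> (nat \<Rightarrow> 'a set \<Rightarrow> 'a list) \<Rightarrow> bool" where
  "valid_subroutine V A \<longleftrightarrow>
     (\<forall>k' T. T \<subseteq> V \<longrightarrow> distinct (A k' T) \<and> set (A k' T) \<subseteq> T \<and>
                         length (A k' T) = min k' (card T))"

definition prefix_set :: "(nat \<Rightarrow> 'a set \<Rightarrow> 'a list) \<Rightarrow> nat \<Rightarrow> 'a set \<Rightarrow> nat \<Rightarrow> 'a set" where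
  "prefix_set A k' T i = set (take i (A k' T))"

definition beta_iterative ::
  "'a set \<Rightarrow> ('a set \<Rightarrow> real) \<Rightarrow> real \<Rightarrow> (nat \<Rightarrow> 'a set \<Rightarrow> 'a list) \<Rightarrow> bool" where
  "beta_iterative V f \<beta> A \<longleftrightarrow>
     (\<forall>k' T i. T \<subseteq> V \<and> i < length (A k' T) \<longrightarrow>
        f (prefix_set A k' T (Suc i)) - f (prefix_set A k' T i)
          \<ge> (1 / \<beta>) * Max ((\<lambda>v. marg f {v} (prefix_set A k' T i)) ` T))"

definition pro_sizes :: "nat \<Rightarrow> nat \<Rightarrow> nat list" where
  "pro_sizes \<tau> \<eta> =
     concat (map (\<lambda>i. replicate (nat \<lceil>real \<tau> / 2 ^ i\<rceil>) (2 ^ i * \<eta>))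
                 [0..<Suc (nat \<lceil>log 2 (real \<tau>)\<rceil>)])"

fun pro_buckets_aux :: "(nat \<Rightarrow> 'a set \<Rightarrow> 'a list) \<Rightarrow> 'a set \<Rightarrow> 'a set \<Rightarrow> nat list \<Rightarrow> 'a set list" where
  "pro_buckets_aux A V S0 [] = []"
| "pro_buckets_aux A V S0 (s # ss) =
     (let B = set (A s (V - S0)) in B # pro_buckets_aux A V (S0 \<union> B) ss)"

definition pro_buckets :: "(nat \<Rightarrow> 'a set \<Rightarrow> 'a list) \<Rightarrow> 'a set \<Rightarrow> nat \<Rightarrow> nat \<Rightarrow> 'a set list" where
  "pro_buckets A V \<tau> \<eta> = pro_buckets_aux A V {} (pro_sizes \<tau> \<eta>)"

end

theory Submission
  imports Defs
begin

lemma len_aux: "length (pro_buckets_aux A V S0 ss) = length ss"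
  by (induction ss arbitrary: S0) (auto simp: Let_def)

lemma bucket_sub:
  assumes "valid_subroutine V A"
  shows "q < length ss \<Longrightarrow> pro_buckets_aux A V S0 ss ! q \<subseteq> V - S0"
proof (induction ss arbitrary: S0 q)
  case Nil then show ?case by simp
next
  case (Cons s ss)
  have B: "set (A s (V - S0)) \<subseteq> V - S0" using assms unfolding valid_subroutine_def by blast
  show ?case
  proof (cases q)
    case 0 then show ?thesis using B by (simp add: Let_def)
  next
    case (Suc q')
    then have "pro_buckets_aux A V (S0 \<union> set (A s (V - S0))) ss ! q' \<subseteq> V - (S0 \<union> set (A s (V - S0)))"
      using Cons by simp
    then show ?thesis using Suc by (auto simp: Let_def)
  qed
qed

lemma bucket_struct:
  assumes "valid_subroutine V A"
  shows "p < q \<Longrightarrow> q < length ss \<Longrightarrow> \<exists>S. pro_buckets_aux A V S0 ss ! p = set (A (ss!p) (V - S))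
     \<and> pro_buckets_aux A V S0 ss ! q \<subseteq> (V - S) - pro_buckets_aux A V S0 ss ! p"
proof (induction ss arbitrary: S0 p q)
  case Nil then show ?case by simp
next
  case (Cons s ss)
  define B where "B = set (A s (V - S0))"
  obtain q' where q': "q = Suc q'" using Cons.prems by (cases q) auto
  show ?case
  proof (cases p)
    case 0
    have "pro_buckets_aux A V (S0 \<union> B) ss ! q' \<subseteq> V - (S0 \<union> B)"
      using bucket_sub[OF assms] Cons.prems q' by simp
    then show ?thesis using 0 q' by (intro exI[of _ S0]) (auto simp: Let_def B_def)
  next
    case (Suc p')
    then have "p' < q'" "q' < length ss" using Cons.prems q' by auto
    from Cons.IH[OF this, of "S0 \<union> B"] obtain S where
      h1: "pro_buckets_aux A V (S0 \<union> B) ss ! p' = set (A (ss!p') (V - S))" and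
      h2: "pro_buckets_aux A V (S0 \<union> B) ss ! q' \<subseteq> (V - S) - pro_buckets_aux A V (S0 \<union> B) ss ! p'" by blast
    have e1: "pro_buckets_aux A V S0 (s # ss) ! p = pro_buckets_aux A V (S0 \<union> B) ss ! p'"
      using Suc by (simp add: Let_def B_def)
    have e2: "pro_buckets_aux A V S0 (s # ss) ! q = pro_buckets_aux A V (S0 \<union> B) ss ! q'"
      using q' by (simp add: Let_def B_def)
    show ?thesis apply (rule exI[of _ S]) unfolding e1 e2 using h1 h2 Suc by simp
  qed
qed

lemma sizes_pos: "x \<in> set (pro_sizes \<tau> \<eta>) \<Longrightarrow> \<eta> \<ge> 1 \<Longrightarrow> x \<ge> 1"
proof -
  assume "x \<in> set (pro_sizes \<tau> \<eta>)" "\<eta> \<ge> 1"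
  then obtain i where "x = 2 ^ i * \<eta>" unfolding pro_sizes_def by auto
  then show "x \<ge> 1" using \<open>\<eta> \<ge> 1\<close> by simp
qed

lemma dimin:
  assumes mono: "monotone_on_sets V f" and sub: "submodular_on V f"
    and PQ: "P \<subseteq> Q" and QV: "Q \<subseteq> V" and EV: "E \<subseteq> V"
  shows "marg f E Q \<le> marg f E P"
proof -
  have PEV: "P \<union> E \<subseteq> V" using PQ QV EV by blast
  have "f ((P \<union> E) \<union> Q) + f ((P \<union> E) \<inter> Q) \<le> f (P \<union> E) + f Q"
    using sub PEV QV unfolding submodular_on_def by blast
  moreover have "f P \<le> f ((P \<union> E) \<inter> Q)"
  proof -
    have "P \<subseteq> (P \<union> E) \<inter> Q" "(P \<union> E) \<inter> Q \<subseteq> V" using PQ QV by blast+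
    then show ?thesis using mono unfolding monotone_on_sets_def by blast
  qed
  moreover have "(P \<union> E) \<union> Q = Q \<union> E" using PQ by blast
  ultimately have "f (Q \<union> E) + f P \<le> f (P \<union> E) + f Q" by simp
  then show ?thesis unfolding marg_def by linarith
qed

lemma subadd:
  assumes mono: "monotone_on_sets V f" and sub: "submodular_on V f"
    and "finite E" "E \<subseteq> V" and XV: "X \<subseteq> V"
  shows "marg f E X \<le> (\<Sum>e\<in>E. marg f {e} X)"
  using assms(3,4)
proof (induction E rule: finite_induct)
  case empty then show ?case by (simp add: marg_def)
next
  case (insert e F)
  have "X \<subseteq> X \<union> F" "X \<union> F \<subseteq> V" "{e} \<subseteq> V" using insert.prems XV by blast+
  from dimin[OF mono sub this] have "marg f {e} (X \<union> F) \<le> marg f {e} X" .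
  moreover have "X \<union> insert e F = X \<union> F \<union> {e}" by blast
  then have "marg f (insert e F) X = marg f F X + marg f {e} (X \<union> F)"
    unfolding marg_def by simp
  moreover have "marg f F X \<le> (\<Sum>e\<in>F. marg f {e} X)" using insert by blast
  ultimately show ?case using insert.hyps by simp
qed

theorem lemma4:
  fixes V :: "'a set" and f :: "'a set \<Rightarrow> real" and A :: "nat \<Rightarrow> 'a set \<Rightarrow> 'a list"
    and k \<tau> \<eta> :: nat and \<beta> :: real and p q :: nat and E :: "'a set"
  assumes "finite V"
    and "normalized f" and "nonneg_on V f" and "monotone_on_sets V f" and "submodular_on V f"
    and "valid_subroutine V A" and "\<beta> \<ge> 1" and "beta_iterative V f \<beta> A"
    and "\<eta> \<ge> 1" and "real \<eta> \<ge> 4 * (log 2 (real k) + 1)"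
    and "2 \<le> \<tau>" and "real \<tau> \<le> real k / (3 * real \<eta> * (log 2 (real k) + 2))"
    and "p < q" and "q < length (pro_buckets A V \<tau> \<eta>)"
    and "E \<subseteq> pro_buckets A V \<tau> \<eta> ! q"
  shows "let X = pro_buckets A V \<tau> \<eta> ! p; Y = pro_buckets A V \<tau> \<eta> ! q;
             \<alpha> = \<beta> * real (card E) / real (card X)
         in f (X \<union> (Y - E)) \<ge> f Y / (1 + \<alpha>) \<and> marg f E X \<le> \<alpha> * f X"
proof -
  define ss where "ss = pro_sizes \<tau> \<eta>"
  define X where "X = pro_buckets A V \<tau> \<eta> ! p"
  define Y where "Y = pro_buckets A V \<tau> \<eta> ! q"
  define \<alpha> where "\<alpha> = \<beta> * real (card E) / real (card X)"
  have ql: "q < length ss" using assms(14) len_aux unfolding ss_def pro_buckets_def by metis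
  obtain S where S: "X = set (A (ss!p) (V - S))" "Y \<subseteq> (V - S) - X"
    using bucket_struct[OF assms(6) assms(13) ql, of "{}"] unfolding X_def Y_def pro_buckets_def ss_def
    by blast
  define T where "T = V - S"
  define s where "s = ss ! p"
  define L where "L = A s T"
  have s1: "s \<ge> 1" using sizes_pos[OF _ assms(9)] ql assms(13) unfolding s_def ss_def
    by (meson less_trans nth_mem)
  have TV: "T \<subseteq> V" unfolding T_def by blast
  have finT: "finite T" using TV assms(1) finite_subset by blast
  have Lp: "distinct L" "set L \<subseteq> T" "length L = min s (card T)"
    using assms(6) TV unfolding valid_subroutine_def L_def by auto
  have XL: "X = set L" using S unfolding L_def s_def T_def by simp
  have cX: "card X = length L" using XL Lp distinct_card by metis
  have XV: "X \<subseteq> V" using XL Lp TV by blast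
  have YV: "Y \<subseteq> V" "Y \<subseteq> T" using S TV unfolding T_def by auto
  have EY: "E \<subseteq> Y" using assms(15) unfolding Y_def .
  have EV: "E \<subseteq> V" using EY YV by blast
  have finE: "finite E" using EV assms(1) finite_subset by blast
  have fpos: "\<And>B. B \<subseteq> V \<Longrightarrow> f B \<ge> 0" using assms(3) unfolding nonneg_on_def by blast
  have mono: "\<And>P Q. P \<subseteq> Q \<Longrightarrow> Q \<subseteq> V \<Longrightarrow> f P \<le> f Q"
    using assms(4) unfolding monotone_on_sets_def by blast
  have per: "real (card X) * marg f {e} X \<le> \<beta> * f X" if eT: "e \<in> T" for e
  proof -
    let ?pre = "\<lambda>i. prefix_set A s T i"
    have step: "f (?pre (Suc i)) - f (?pre i) \<ge> (1/\<beta>) * marg f {e} X" if i: "i < length L" for i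
    proof -
      have preX: "?pre i \<subseteq> X" unfolding prefix_set_def XL L_def by (meson set_take_subset)
      have "marg f {e} X \<le> marg f {e} (?pre i)"
        using dimin[OF assms(4,5) preX XV] eT TV by auto
      also have "\<dots> \<le> Max ((\<lambda>v. marg f {v} (?pre i)) ` T)"
        using finT eT by (intro Max_ge) auto
      finally have m: "marg f {e} X \<le> Max ((\<lambda>v. marg f {v} (?pre i)) ` T)" .
      have "f (?pre (Suc i)) - f (?pre i) \<ge> (1/\<beta>) * Max ((\<lambda>v. marg f {v} (?pre i)) ` T)"
        using assms(8) TV i unfolding beta_iterative_def L_def by blast
      moreover have "(1/\<beta>) * marg f {e} X \<le> (1/\<beta>) * Max ((\<lambda>v. marg f {v} (?pre i)) ` T)"
        using m assms(7) by (intro mult_left_mono) auto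
      ultimately show ?thesis by linarith
    qed
    have "(\<Sum>i<length L. (1/\<beta>) * marg f {e} X) \<le> (\<Sum>i<length L. f (?pre (Suc i)) - f (?pre i))"
      using step by (intro sum_mono) auto
    also have "\<dots> = f (?pre (length L)) - f (?pre 0)" by (rule sum_lessThan_telescope)
    also have "?pre (length L) = X" unfolding prefix_set_def XL L_def by simp
    also have "?pre 0 = {}" unfolding prefix_set_def by simp
    finally have "real (length L) * ((1/\<beta>) * marg f {e} X) \<le> f X"
      using assms(2) unfolding normalized_def by simp
    then have "\<beta> * (real (length L) * ((1/\<beta>) * marg f {e} X)) \<le> \<beta> * f X"
      using assms(7) by (intro mult_left_mono) auto
    then show ?thesis using assms(7) cX by (simp add: field_simps)
  qed
  have a0: "\<alpha> \<ge> 0" unfolding \<alpha>_def using assms(7) by simp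
  have claim2: "marg f E X \<le> \<alpha> * f X"
  proof (cases "card X = 0")
    case True
    then have "card T = 0" using cX Lp s1 by simp
    then have "T = {}" using finT by simp
    then have "E = {}" using EY YV by blast
    then show ?thesis using True unfolding \<alpha>_def marg_def by simp
  next
    case False
    have "marg f E X \<le> (\<Sum>e\<in>E. marg f {e} X)" using subadd[OF assms(4,5) finE EV XV] .
    also have "\<dots> \<le> (\<Sum>e\<in>E. \<beta> * f X / real (card X))"
    proof (intro sum_mono)
      fix e assume "e \<in> E"
      then have "real (card X) * marg f {e} X \<le> \<beta> * f X" using per EY YV by blast
      then show "marg f {e} X \<le> \<beta> * f X / real (card X)" using False
        by (simp add: field_simps)
    qed
    also have "\<dots> = \<alpha> * f X" unfolding \<alpha>_def by simp
    finally show ?thesis .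
  qed
  have U: "X \<union> (Y - E) \<union> E = X \<union> Y" using EY by blast
  have c0: "f Y \<le> f (X \<union> Y)" using mono XV YV by blast
  have c2: "f (X \<union> Y) = f (X \<union> (Y - E)) + marg f E (X \<union> (Y - E))" unfolding marg_def U by simp
  have c3: "marg f E (X \<union> (Y - E)) \<le> marg f E X"
    using dimin[OF assms(4,5), of X "X \<union> (Y - E)" E] XV YV EV by auto
  have c4: "\<alpha> * f X \<le> \<alpha> * f (X \<union> (Y - E))"
  proof -
    have "X \<subseteq> X \<union> (Y - E)" "X \<union> (Y - E) \<subseteq> V" using XV YV by blast+
    then have "f X \<le> f (X \<union> (Y - E))" by (rule mono)
    then show ?thesis using a0 by (intro mult_left_mono) auto
  qed
  have "f Y \<le> (1 + \<alpha>) * f (X \<union> (Y - E))" using c0 c2 c3 c4 claim2 by (simp add: algebra_simps)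
  hence c1: "f Y / (1 + \<alpha>) \<le> f (X \<union> (Y - E))" using a0 by (simp add: divide_le_eq mult.commute)
  show ?thesis using c1 claim2 unfolding Let_def X_def[symmetric] Y_def[symmetric] \<alpha>_def[symmetric] by simp
qed

end
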